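(* Consider the following setup. Let $K<\infty$ and, for $i=1,\ldots,K$, let $\{T^{(i)}_{n_i}\}$ be a sequence of test statistics for testing $H_0^{(i)}:\theta_i\in\Theta_0^{(i)}$ against $\theta_i\in\Theta^{(i)}\setminus\Theta_0^{(i)}$, with $p$-values $p_i=p_i^{(n_i)}$. Assume that under the null the statistics are independent for all sample sizes, and that each sequence has exact slope $c_i(\theta_i)\ge0$, i.e. $-\frac{2}{n_i}\log p_i^{(n_i)}\to c_i(\theta_i)$ with probability one as $n_i\to\infty$, with $c_i(\theta_i)=0$ for $\theta_i\in\Theta_0^{(i)}$ and $c_i(\theta_i)>0$ otherwise. Let $n=\frac1K\sum_i n_i$, $n_i/n\to\lambda_i>0$, $\sum_i\lambda_i=K$, and assume $\lambda_1c_1(\theta_1)\ge\cdots\ge\lambda_Kc_K(\theta_K)\ge0$ where $c_i(\theta_i)>0$ exactly for $1\le i\le\ell$. Let $p_{(1)}\le\cdots\le p_{(K)}$ be the ordered $p$-values and consider $$T_A=\max_{1\le j\le K}\frac{-2\sum_{i=1}^j\log p_{(i)}-A_j}{B_j},$$ where $A_j$ and $B_j>0$ are finite constants depending only on $j$ and $K$, $B_j$ is monotone increasing in $j$, and the values $\frac{\sum_{i=1}^j\lambda_ic_i(\theta_i)}{B_j}$, $j=1,\ldots,K$, have no ties. Then $T_A$ is not ABO in general: its exact slope satisfies $$C_A(\vec\theta)\le\max_{1\le j\le\ell}\frac{B_1}{B_j}\sum_{i=1}^j\lambda_ic_i(\theta_i),$$ and equality holds if and only if $\ell=1$.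
   Context: The exact slope of a combination test with $p$-value $p$ (computed from its null distribution, under which $p_1,\ldots,p_K$ are i.i.d. Unif$(0,1)$) is the function $C(\vec\theta)$ with $-\frac{2}{n}\log p\to C(\vec\theta)$ with probability one as $n\to\infty$. A combination test is asymptotically Bahadur optimal (ABO) if its exact slope equals $\sum_{i=1}^\ell\lambda_ic_i(\theta_i)$. With $A_j=2\sum_{i=1}^K w(i,j)$, $B_j=2(\sum_{i=1}^K w^2(i,j))^{1/2}$, $w(i,j)=\min\{1,j/i\}$, $T_A$ is the AFz statistic. *)

theory Defs
  imports "HOL-Probability.Probability"
begin

definition TA :: "nat \<Rightarrow> (nat \<Rightarrow> real) \<Rightarrow> (nat \<Rightarrow> real) \<Rightarrow> (nat \<Rightarrow> real) \<Rightarrow> real" where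
  "TA K A B u = Max ((\<lambda>j. (- 2 * (\<Sum>i<j. ln (sort (map u [1..<K+1]) ! i)) - A j) / B j) ` {1..K})"

definition null_pvals :: "nat \<Rightarrow> (nat \<Rightarrow> real) measure" where
  "null_pvals K = PiM {1..K} (\<lambda>_. uniform_measure lborel {0<..<1::real})"

definition TA_pvalue :: "nat \<Rightarrow> (nat \<Rightarrow> real) \<Rightarrow> (nat \<Rightarrow> real) \<Rightarrow> real \<Rightarrow> real" where
  "TA_pvalue K A B t = measure (null_pvals K) {u \<in> space (null_pvals K). TA K A B u \<ge> t}"

end

theory Submission
  imports Defs "HOL-Real_Asymp.Real_Asymp"
begin


lemma sort_map_eq: "sort (map u L) = map u (sort_key u L)"
  by (rule properties_for_sort) (simp_all add: mset_map)

lemma sum_take_set: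
  assumes "distinct ps" "j \<le> length ps"
  shows "(\<Sum>i<j. h (ps ! i)) = (\<Sum>x\<in>set (take j ps). h x)"
proof -
  have "(\<Sum>x\<in>set (take j ps). h x) = sum_list (map h (take j ps))"
    using assms by (simp add: sum_list_distinct_conv_sum_set)
  also have "\<dots> = (\<Sum>i<j. h (ps ! i))"
    using assms by (simp add: sum_list_sum_nth min_def atLeast0LessThan)
  finally show ?thesis by simp
qed

lemma sorted_take_drop:
  assumes "sorted (map u ps)" "a \<in> set (take j ps)" "b \<in> set (drop j ps)"
  shows "u a \<le> (u b :: real)"
proof -
  have "sorted (map u (take j ps) @ map u (drop j ps))"
    using assms(1) by (metis append_take_drop_id map_append)
  then show ?thesis using assms(2,3) by (auto simp: sorted_append)
qed

lemma exchange:
  fixes f :: "'a \<Rightarrow> real"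
  assumes "finite A" "finite B" "card A = card B" "\<And>a b. a \<in> A - B \<Longrightarrow> b \<in> B - A \<Longrightarrow> f a \<le> f b"
  shows "sum f A \<le> sum f B"
proof -
  have c: "card (A - B) = card (B - A)"
    using card_Diff_subset_Int[of A B] card_Diff_subset_Int[of B A] assms(1-3) by (simp add: Int_commute)
  have sA: "sum f A = sum f (A - B) + sum f (A \<inter> B)"
    using sum.Int_Diff[OF assms(1), of f B] by simp
  have sB: "sum f B = sum f (B - A) + sum f (A \<inter> B)"
    using sum.Int_Diff[OF assms(2), of f A] by (simp add: Int_commute)
  show ?thesis
  proof (cases "A - B = {}")
    case True
    have "card (B - A) = 0" using c True by simp
    then have "B - A = {}" using assms(2) by simp
    then have "sum f (B - A) = 0" "sum f (A - B) = 0" using True by simp_all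
    then show ?thesis using sA sB by linarith
  next
    case False
    define m where "m = Max (f ` (A - B))"
    have fin: "finite (A - B)" "finite (B - A)" using assms by auto
    have m1: "\<And>a. a \<in> A - B \<Longrightarrow> f a \<le> m" unfolding m_def by (rule Max_ge) (use fin in auto)
    have m2: "\<And>b. b \<in> B - A \<Longrightarrow> m \<le> f b"
    proof -
      fix b assume b: "b \<in> B - A"
      have "m \<in> f ` (A - B)" unfolding m_def using False fin by (intro Max_in) auto
      then obtain a where "a \<in> A - B" "m = f a" by blast
      then show "m \<le> f b" using assms(4) b by auto
    qed
    have "sum f (A - B) \<le> sum (\<lambda>_. m) (A - B)" by (rule sum_mono) (use m1 in auto)
    also have "\<dots> = sum (\<lambda>_. m) (B - A)" using c by simp
    also have "\<dots> \<le> sum f (B - A)" by (rule sum_mono) (use m2 in auto)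
    finally show ?thesis using sA sB by linarith
  qed
qed



lemma J0_exists:
  fixes u :: "nat \<Rightarrow> real"
  assumes "j \<le> K"
  shows "\<exists>J0. J0 \<subseteq> {1..K} \<and> card J0 = j \<and>
     (\<forall>h::real\<Rightarrow>real. (\<Sum>i<j. h (sort (map u [1..<K+1]) ! i)) = (\<Sum>x\<in>J0. h (u x))) \<and>
     (\<forall>a\<in>J0. \<forall>b\<in>{1..K}-J0. u a \<le> u b)"
proof -
  define ps where "ps = sort_key u [1..<K+1]"
  have d: "distinct ps" and l: "length ps = K" and st: "set ps = {1..K}"
    unfolding ps_def by auto
  have so: "sorted (map u ps)" unfolding ps_def by simp
  show ?thesis
  proof (intro exI conjI allI ballI)
    show "set (take j ps) \<subseteq> {1..K}" using st by (metis set_take_subset)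
    show "card (set (take j ps)) = j" using d l assms by (simp add: distinct_card)
    fix h :: "real \<Rightarrow> real"
    have "(\<Sum>i<j. h (sort (map u [1..<K+1]) ! i)) = (\<Sum>i<j. (h \<circ> u) (ps ! i))"
      unfolding sort_map_eq ps_def[symmetric] using l assms by (intro sum.cong) auto
    also have "\<dots> = (\<Sum>x\<in>set (take j ps). (h \<circ> u) x)"
      using d l assms by (intro sum_take_set) auto
    finally show "(\<Sum>i<j. h (sort (map u [1..<K+1]) ! i)) = (\<Sum>x\<in>set (take j ps). h (u x))"
      by simp
  next
    fix a b assume a: "a \<in> set (take j ps)" and b: "b \<in> {1..K} - set (take j ps)"
    have "b \<in> set (drop j ps)" using b st by (metis DiffE append_take_drop_id set_append Un_iff)
    then show "u a \<le> u b" using sorted_take_drop[OF so a] by blast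
  qed
qed

lemma sorted_lower:
  fixes u :: "nat \<Rightarrow> real"
  assumes pos: "\<And>i. i \<in> {1..K} \<Longrightarrow> 0 < u i" and j: "j \<le> K"
  shows "(\<Sum>i<j. ln (sort (map u [1..<K+1]) ! i)) \<le> (\<Sum>i=1..j. ln (u i))"
proof -
  obtain J0 where J0: "J0 \<subseteq> {1..K}" "card J0 = j"
    "\<And>h::real\<Rightarrow>real. (\<Sum>i<j. h (sort (map u [1..<K+1]) ! i)) = (\<Sum>x\<in>J0. h (u x))"
    "\<And>a b. a\<in>J0 \<Longrightarrow> b\<in>{1..K}-J0 \<Longrightarrow> u a \<le> u b"
    using J0_exists[OF j, of u] by blast
  have "(\<Sum>x\<in>J0. ln (u x)) \<le> (\<Sum>i=1..j. ln (u i))"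
  proof (rule exchange)
    show "finite J0" using J0(1) finite_subset by blast
    show "card J0 = card {1..j}" using J0(2) by simp
    fix a b assume a: "a \<in> J0 - {1..j}" and b: "b \<in> {1..j} - J0"
    have "b \<in> {1..K} - J0" using b j by auto
    then have "u a \<le> u b" using J0(4) a by blast
    moreover have "0 < u a" using a J0(1) pos by blast
    ultimately show "ln (u a) \<le> ln (u b)" by simp
  qed simp
  then show ?thesis using J0(3)[of ln] by simp
qed

lemma sorted_upper:
  fixes u :: "nat \<Rightarrow> real"
  assumes pos: "\<And>i. i \<in> {1..K} \<Longrightarrow> 0 < u i \<and> u i \<le> 1" and j: "j \<le> K"
  shows "(\<Sum>i=1..K. ln (u i)) \<le> (\<Sum>i<j. ln (sort (map u [1..<K+1]) ! i))"
proof -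
  obtain J0 where J0: "J0 \<subseteq> {1..K}" "card J0 = j"
    "\<And>h::real\<Rightarrow>real. (\<Sum>i<j. h (sort (map u [1..<K+1]) ! i)) = (\<Sum>x\<in>J0. h (u x))"
    using J0_exists[OF j, of u] by blast
  have "(\<Sum>i=1..K. - ln (u i)) \<ge> (\<Sum>x\<in>J0. - ln (u x))"
    by (rule sum_mono2) (use J0(1) pos in auto)
  then show ?thesis using J0(3)[of ln] by (simp add: sum_negf)
qed

lemma order_stat:
  fixes u :: "nat \<Rightarrow> real"
  assumes i: "i < K"
  shows "sort (map u [1..<K+1]) ! i = Min ((\<lambda>J. Max (u ` J)) ` {J. J \<subseteq> {1..K} \<and> card J = Suc i})"
proof -
  define ps where "ps = sort_key u [1..<K+1]"
  have d: "distinct ps" and l: "length ps = K" and st: "set ps = {1..K}"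
    unfolding ps_def by auto
  have so: "sorted (map u ps)" unfolding ps_def by simp
  have r: "sort (map u [1..<K+1]) ! i = u (ps ! i)"
    unfolding sort_map_eq ps_def[symmetric] using l i by simp
  define F where "F = {J. J \<subseteq> {1..K} \<and> card J = Suc i}"
  have finF: "finite F" unfolding F_def by (rule finite_subset[of _ "Pow {1..K}"]) auto
  have J1: "set (take (Suc i) ps) \<in> F"
    unfolding F_def using d l i st by (auto simp: distinct_card dest: in_set_takeD)
  have ne1: "set (take (Suc i) ps) \<noteq> {}" using l i by (cases ps) auto
  have "Max (u ` set (take (Suc i) ps)) \<le> u (ps ! i)"
  proof (subst Max_le_iff)
    show "\<forall>a\<in>u ` set (take (Suc i) ps). a \<le> u (ps ! i)"
    proof
      fix y assume "y \<in> u ` set (take (Suc i) ps)"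
      then obtain k where k: "k < Suc i" "y = u (ps ! k)" using l i
        by (auto simp: in_set_conv_nth)
      have "(map u ps) ! k \<le> (map u ps) ! i" using so k l i by (intro sorted_nth_mono) auto
      then show "y \<le> u (ps ! i)" using k l i by simp
    qed
  qed (use ne1 in auto)
  moreover have "u (ps ! i) \<le> Max (u ` J)" if J: "J \<in> F" for J
  proof -
    have fJ: "finite J" using J unfolding F_def using finite_subset by blast
    have "\<not> J \<subseteq> set (take i ps)"
    proof
      assume "J \<subseteq> set (take i ps)"
      then have "card J \<le> card (set (take i ps))" by (simp add: card_mono)
      also have "\<dots> = i" using d l i by (simp add: distinct_card)
      finally show False using J unfolding F_def by simp
    qed
    then obtain b where b: "b \<in> J" "b \<notin> set (take i ps)" by blast
    have "b \<in> set ps" using b J st unfolding F_def by auto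
    then have "b \<in> set (drop i ps)" using b by (metis append_take_drop_id set_append Un_iff)
    then obtain ia where ia: "ia < length (drop i ps)" "b = drop i ps ! ia"
      by (auto simp: in_set_conv_nth)
    define k where "k = i + ia"
    have k: "i \<le> k" "k < K" "b = ps ! k" using ia l by (auto simp: k_def)
    have "(map u ps) ! i \<le> (map u ps) ! k" using so k l by (intro sorted_nth_mono) auto
    then have "u (ps ! i) \<le> u b" using k l i by simp
    also have "u b \<le> Max (u ` J)" using b fJ by simp
    finally show ?thesis .
  qed
  moreover have "Min ((\<lambda>J. Max (u ` J)) ` F) \<le> Max (u ` set (take (Suc i) ps))"
    by (rule Min_le) (use finF J1 in auto)
  moreover have "u (ps ! i) \<le> Min ((\<lambda>J. Max (u ` J)) ` F)"
  proof (subst Min_ge_iff)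
    show "finite ((\<lambda>J. Max (u ` J)) ` F)" using finF by simp
    show "(\<lambda>J. Max (u ` J)) ` F \<noteq> {}" using J1 by blast
  qed (use calculation(2) in blast)
  ultimately have "Min ((\<lambda>J. Max (u ` J)) ` F) = u (ps ! i)" by linarith
  then show ?thesis unfolding r F_def by simp
qed



definition unif01 :: "real measure" where "unif01 = uniform_measure lborel {0<..<1}"

lemma unif_prob: "prob_space unif01"
  unfolding unif01_def by (rule prob_space_uniform_measure) simp_all

lemma sets_unif[simp]: "sets unif01 = sets borel"
  unfolding unif01_def by simp

lemma emeasure_unif:
  assumes "0 \<le> s" "s \<le> 1"
  shows "emeasure unif01 {0<..s} = ennreal s"
proof -
  have "emeasure unif01 {0<..s} = emeasure lborel ({0<..<1} \<inter> {0<..s}) / emeasure lborel {0<..<1::real}"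
    unfolding unif01_def by (subst emeasure_uniform_measure) auto
  also have "{0<..<1} \<inter> {0<..s} = (if s = 1 then {0<..<1} else {0<..s::real})" using assms by auto
  finally show ?thesis using assms by (auto simp: divide_ennreal_def)
qed

lemma emeasure_unif01: "emeasure unif01 {0<..<1} = 1"
  unfolding unif01_def by (rule emeasure_uniform_measure_1) simp_all

lemma null_eq: "null_pvals K = PiM {1..K} (\<lambda>_. unif01)"
  unfolding null_pvals_def unif01_def by simp

lemma null_prob: "prob_space (null_pvals K)"
  unfolding null_eq by (rule prob_space_PiM) (rule unif_prob)

lemma comp_meas: "a \<in> {1..K} \<Longrightarrow> (\<lambda>u. u a) \<in> borel_measurable (null_pvals K)"
proof -
  assume a: "a \<in> {1..K}"
  have "(\<lambda>u. u a) \<in> measurable (PiM {1..K} (\<lambda>_. unif01)) unif01"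
    using measurable_component_singleton[OF a] by simp
  then show ?thesis unfolding null_eq by (simp cong: measurable_cong_sets)
qed

lemma TA_alt:
  "TA K A B u = Max ((\<lambda>j. (- 2 * (\<Sum>i<j. ln (Min ((\<lambda>J. Max ((\<lambda>a. u a) ` J)) ` {J. J \<subseteq> {1..K} \<and> card J = Suc i}))) - A j) / B j) ` {1..K})"
  unfolding TA_def
  by (intro arg_cong[where f=Max] image_cong refl arg_cong2[where f="(/)"] arg_cong2[where f="(-)"]
        arg_cong2[where f="(*)"] sum.cong arg_cong[where f=ln] order_stat) auto

lemma TA_meas: "TA K A B \<in> borel_measurable (null_pvals K)"
proof -
  have finF: "finite {J. J \<subseteq> {1..K} \<and> card J = Suc i}" for i
    by (rule finite_subset[of _ "Pow {1..K}"]) auto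
  have mJ: "(\<lambda>u. Max ((\<lambda>a. u a) ` J)) \<in> borel_measurable (null_pvals K)" if "J \<subseteq> {1..K}" for J
    proof (intro borel_measurable_Max)
    show "finite J" using that finite_subset by blast
    fix a assume "a \<in> J"
    then have "a \<in> {1..K}" using that by blast
    then show "(\<lambda>u. u a) \<in> borel_measurable (null_pvals K)" by (rule comp_meas)
  qed
  show ?thesis
    unfolding TA_alt[abs_def]
    apply (rule borel_measurable_Max, simp)
    apply (intro borel_measurable_divide borel_measurable_diff
        borel_measurable_times borel_measurable_const borel_measurable_sum borel_measurable_ln
        borel_measurable_Min finF)
    using mJ by auto
qed



lemma PP: "product_prob_space (\<lambda>_::nat. unif01)"
  by (simp add: product_prob_space_def product_prob_space_axioms_def product_sigma_finite_def
      unif_prob prob_space_imp_sigma_finite)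

lemma space_null: "space (null_pvals K) = {1..K} \<rightarrow>\<^sub>E UNIV"
  unfolding null_eq space_PiM unif01_def by simp

lemma null_lower:
  assumes K: "1 \<le> K" and B1: "0 < B 1" and s: "0 < s" "s \<le> 1"
    and ts: "t \<le> (- 2 * ln s - A 1) / B 1"
  shows "s \<le> TA_pvalue K A B t"
proof -
  interpret P: product_prob_space "\<lambda>_::nat. unif01" "{1..K}" by (rule PP)
  interpret Q: prob_space "null_pvals K" by (rule null_prob)
  define X where "X = (\<lambda>a::nat. if a = 1 then {0<..s} else {0<..<1::real})"
  define E where "E = Pi\<^sub>E {1..K} X"
  have XS: "X a \<in> sets borel" for a unfolding X_def by simp
  have "emeasure (null_pvals K) E = (\<Prod>a\<in>{1..K}. emeasure unif01 (X a))"
    unfolding null_eq E_def by (rule P.emeasure_PiM) (auto simp: XS)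
  also have "\<dots> = (\<Prod>a\<in>{1..K}. if a = 1 then ennreal s else 1)"
    by (intro prod.cong refl) (simp add: X_def emeasure_unif emeasure_unif01 s less_imp_le)
  also have "\<dots> = ennreal s" using K by (subst prod.delta) auto
  finally have mE: "measure (null_pvals K) E = s"
    using s by (simp add: Q.emeasure_eq_measure)
  have [measurable]: "TA K A B \<in> borel_measurable (null_pvals K)" by (rule TA_meas)
  have Sm: "{u \<in> space (null_pvals K). t \<le> TA K A B u} \<in> sets (null_pvals K)" by measurable
  have sub: "E \<subseteq> {u \<in> space (null_pvals K). t \<le> TA K A B u}"
  proof
    fix u assume u: "u \<in> E"
    have pos: "\<And>i. i \<in> {1..K} \<Longrightarrow> 0 < u i" using u s unfolding E_def X_def
      by (auto split: if_splits)
    have "u 1 \<in> X 1" using u K unfolding E_def by (auto simp: PiE_def Pi_def)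
    then have u1: "u 1 \<le> s" "0 < u 1" unfolding X_def by auto
    have "(\<Sum>i<1. ln (sort (map u [1..<K+1]) ! i)) \<le> (\<Sum>i=1..1. ln (u i))"
      by (rule sorted_lower[OF pos K])
    then have "ln (sort (map u [1..<K+1]) ! 0) \<le> ln (u 1)" by simp
    also have "\<dots> \<le> ln s" using u1 by simp
    finally have "t \<le> (- 2 * (\<Sum>i<1. ln (sort (map u [1..<K+1]) ! i)) - A 1) / B 1"
      using ts B1 by (simp add: divide_right_mono order.trans[OF ts])
    also have "\<dots> \<le> TA K A B u" unfolding TA_def
      by (rule Max_ge, simp, rule image_eqI[where x=1]) (use K in simp_all)
    finally have "t \<le> TA K A B u" .
    moreover have "u \<in> space (null_pvals K)" using u unfolding E_def space_null by (auto simp: PiE_def)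
    ultimately show "u \<in> {u \<in> space (null_pvals K). t \<le> TA K A B u}" by simp
  qed
  have "measure (null_pvals K) E \<le> measure (null_pvals K) {u \<in> space (null_pvals K). t \<le> TA K A B u}"
    by (rule Q.finite_measure_mono[OF sub Sm])
  then show ?thesis unfolding TA_pvalue_def mE by simp
qed



lemma nn_int_powr:
  assumes b: "0 \<le> b" "b < 1"
  shows "(\<integral>\<^sup>+x. ennreal (indicator {0<..<1} x * x powr (- b)) \<partial>unif01) = ennreal (1 / (1 - b))"
proof -
  have hi: "((\<lambda>x::real. x powr (- b)) has_integral (1 / (1 - b))) {0<..<1}"
    using has_integral_powr_from_0[of "- b" 1] b by (simp add: has_integral_Icc_iff_Ioo)
  have "(\<integral>\<^sup>+x. ennreal (indicator {0<..<1} x * x powr (- b)) \<partial>unif01)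
      = (\<integral>\<^sup>+x. ennreal (indicator {0<..<1} x * x powr (- b)) * indicator {0<..<1} x \<partial>lborel)
        / emeasure lborel {0<..<1::real}"
    unfolding unif01_def by (rule nn_integral_uniform_measure) auto
  also have "(\<integral>\<^sup>+x. ennreal (indicator {0<..<1} x * x powr (- b)) * indicator {0<..<1} x \<partial>lborel)
      = (\<integral>\<^sup>+x. ennreal (indicator {0<..<1} x * x powr (- b)) \<partial>lborel)"
    by (intro nn_integral_cong) (auto simp: indicator_def)
  also have "\<dots> = ennreal (1 / (1 - b))"
    by (rule nn_integral_has_integral_lebesgue[OF _ hi]) simp
  finally show ?thesis by (simp add: divide_ennreal_def)
qed

lemma markov_H:
  assumes L: "1 < L"
  shows "emeasure (null_pvals K) {u \<in> space (null_pvals K). u \<in> Pi\<^sub>E {1..K} (\<lambda>_. {0<..<1}) \<and> (\<Prod>a\<in>{1..K}. u a) \<le> exp (- L)}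
     \<le> ennreal (exp (1 - L) * L ^ K)"
proof -
  interpret P: product_prob_space "\<lambda>_::nat. unif01" "{1..K}" by (rule PP)
  define b where "b = 1 - 1 / L"
  have b: "0 \<le> b" "b < 1" using L unfolding b_def by (auto simp: field_simps)
  have b1: "1 / (1 - b) = L" using L unfolding b_def by simp
  define f where "f = (\<lambda>x::real. indicator {0<..<1} x * x powr (- b))"
  define c where "c = exp (- L) powr b"
  have c: "c = exp (1 - L)" unfolding c_def b_def using L by (simp add: powr_def field_simps)
  define H where "H = {u \<in> space (null_pvals K). u \<in> Pi\<^sub>E {1..K} (\<lambda>_. {0<..<1}) \<and> (\<Prod>a\<in>{1..K}. u a) \<le> exp (- L)}"
  have fm: "(\<lambda>x. ennreal (f x)) \<in> borel_measurable unif01"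
    unfolding f_def by (simp cong: measurable_cong_sets)
  have Hm: "H \<in> sets (null_pvals K)"
  proof -
    have "(\<lambda>u. \<Prod>a\<in>{1..K}. u a) \<in> borel_measurable (null_pvals K)"
      by (intro borel_measurable_prod comp_meas) auto
    moreover have "Pi\<^sub>E {1..K} (\<lambda>_. {0<..<1::real}) \<in> sets (null_pvals K)"
      unfolding null_eq by (intro sets_PiM_I_finite) auto
    ultimately have "{u \<in> space (null_pvals K). (\<Prod>a\<in>{1..K}. u a) \<le> exp (- L)} \<inter> Pi\<^sub>E {1..K} (\<lambda>_. {0<..<1::real}) \<in> sets (null_pvals K)"
      by (intro sets.Int borel_measurable_le) auto
    moreover have "H = {u \<in> space (null_pvals K). (\<Prod>a\<in>{1..K}. u a) \<le> exp (- L)} \<inter> Pi\<^sub>E {1..K} (\<lambda>_. {0<..<1::real})"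
      unfolding H_def by auto
    ultimately show ?thesis by simp
  qed
  have pt: "indicator H u \<le> ennreal c * (\<Prod>a\<in>{1..K}. ennreal (f (u a)))" for u
  proof (cases "u \<in> H")
    case True
    then have u: "\<And>a. a \<in> {1..K} \<Longrightarrow> 0 < u a \<and> u a < 1" "(\<Prod>a\<in>{1..K}. u a) \<le> exp (- L)"
      unfolding H_def by auto
    have pp: "0 < (\<Prod>a\<in>{1..K}. u a)" using u(1) by (intro prod_pos) auto
    have "(\<Prod>a\<in>{1..K}. f (u a)) = (\<Prod>a\<in>{1..K}. u a powr (- b))"
      using u(1) unfolding f_def by (intro prod.cong) auto
    also have "\<dots> = (\<Prod>a\<in>{1..K}. u a) powr (- b)" by (simp add: prod_powr_distrib)
    also have "\<dots> \<ge> exp (- L) powr (- b)"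
      using pp u(2) b by (intro powr_mono2') auto
    finally have X: "exp (- L) powr (- b) \<le> (\<Prod>a\<in>{1..K}. f (u a))" .
    have e: "c * exp (- L) powr (- b) = 1" unfolding c_def by (simp add: powr_add[symmetric])
    have "c * exp (- L) powr (- b) \<le> c * (\<Prod>a\<in>{1..K}. f (u a))"
      by (rule mult_left_mono[OF X]) (simp add: c_def)
    then have "1 \<le> c * (\<Prod>a\<in>{1..K}. f (u a))" using e by simp
    moreover have "(\<Prod>a\<in>{1..K}. ennreal (f (u a))) = ennreal (\<Prod>a\<in>{1..K}. f (u a))"
      by (rule prod_ennreal) (simp add: f_def)
    ultimately show ?thesis using True
      by (simp add: ennreal_mult'[symmetric] c_def)
  qed simp
  have "emeasure (null_pvals K) H = (\<integral>\<^sup>+u. indicator H u \<partial>null_pvals K)"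
    using Hm by simp
  also have "\<dots> \<le> (\<integral>\<^sup>+u. ennreal c * (\<Prod>a\<in>{1..K}. ennreal (f (u a))) \<partial>null_pvals K)"
    by (intro nn_integral_mono pt)
  also have "\<dots> = ennreal c * (\<integral>\<^sup>+u. (\<Prod>a\<in>{1..K}. ennreal (f (u a))) \<partial>null_pvals K)"
  proof (rule nn_integral_cmult)
    show "(\<lambda>u. \<Prod>a\<in>{1..K}. ennreal (f (u a))) \<in> borel_measurable (null_pvals K)"
    proof (rule borel_measurable_prod_ennreal)
      have fb: "(\<lambda>x. ennreal (f x)) \<in> borel_measurable borel" unfolding f_def by simp
      fix a assume "a \<in> {1..K}"
      then show "(\<lambda>u. ennreal (f (u a))) \<in> borel_measurable (null_pvals K)"
        by (rule measurable_compose[OF comp_meas fb])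
    qed
  qed
  also have "(\<integral>\<^sup>+u. (\<Prod>a\<in>{1..K}. ennreal (f (u a))) \<partial>null_pvals K) = (\<Prod>a\<in>{1..K}. \<integral>\<^sup>+x. ennreal (f x) \<partial>unif01)"
    unfolding null_eq by (rule P.product_nn_integral_prod) (auto simp: fm)
  also have "\<dots> = (\<Prod>a\<in>{1..K}. ennreal L)"
    unfolding f_def nn_int_powr[OF b] b1 by simp
  also have "\<dots> = ennreal (L ^ K)" using L by (simp add: prod_ennreal ennreal_power)
  finally show ?thesis unfolding H_def c using L by (simp add: ennreal_mult'[symmetric])
qed



lemma null_upper:
  assumes K: "1 \<le> K" and B1: "0 < B 1" and Bm: "\<And>j. j \<in> {1..K} \<Longrightarrow> B 1 \<le> B j"
    and aA: "\<And>j. j \<in> {1..K} \<Longrightarrow> a \<le> A j" and t: "0 \<le> t" and L: "1 < (a + B 1 * t) / 2"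
  shows "TA_pvalue K A B t \<le> exp (1 - (a + B 1 * t) / 2) * ((a + B 1 * t) / 2) ^ K"
proof -
  define L where "L = (a + B 1 * t) / 2"
  have L1: "1 < L" using L unfolding L_def .
  interpret P: product_prob_space "\<lambda>_::nat. unif01" "{1..K}" by (rule PP)
  interpret Q: prob_space "null_pvals K" by (rule null_prob)
  define G where "G = Pi\<^sub>E {1..K} (\<lambda>_. {0<..<1::real})"
  define H where "H = {u \<in> space (null_pvals K). u \<in> Pi\<^sub>E {1..K} (\<lambda>_. {0<..<1}) \<and> (\<Prod>a\<in>{1..K}. u a) \<le> exp (- L)}"
  define S where "S = {u \<in> space (null_pvals K). t \<le> TA K A B u}"
  have Gs: "G \<in> sets (null_pvals K)" unfolding G_def null_eq by (intro sets_PiM_I_finite) auto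
  have "emeasure (null_pvals K) G = (\<Prod>a\<in>{1..K}. emeasure unif01 {0<..<1})"
    unfolding null_eq G_def by (rule P.emeasure_PiM) auto
  then have "emeasure (null_pvals K) G = 1" by (simp add: emeasure_unif01)
  then have mG: "measure (null_pvals K) G = 1" by (simp add: Q.emeasure_eq_measure)
  have mC: "measure (null_pvals K) (space (null_pvals K) - G) = 0"
    using Q.prob_compl[OF Gs] mG by simp
  have [measurable]: "TA K A B \<in> borel_measurable (null_pvals K)" by (rule TA_meas)
  have Hs: "H \<in> sets (null_pvals K)"
  proof -
    have "(\<lambda>u. \<Prod>a\<in>{1..K}. u a) \<in> borel_measurable (null_pvals K)"
      by (intro borel_measurable_prod comp_meas) auto
    then have "{u \<in> space (null_pvals K). (\<Prod>a\<in>{1..K}. u a) \<le> exp (- L)} \<inter> G \<in> sets (null_pvals K)"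
      using Gs by (intro sets.Int borel_measurable_le) auto
    moreover have "H = {u \<in> space (null_pvals K). (\<Prod>a\<in>{1..K}. u a) \<le> exp (- L)} \<inter> G"
      unfolding H_def G_def by auto
    ultimately show ?thesis by simp
  qed
  have sub: "S \<subseteq> H \<union> (space (null_pvals K) - G)"
  proof
    fix u assume uS: "u \<in> S"
    show "u \<in> H \<union> (space (null_pvals K) - G)"
    proof (cases "u \<in> G")
      case False then show ?thesis using uS unfolding S_def by auto
    next
      case True
      then have u01: "\<And>i. i \<in> {1..K} \<Longrightarrow> 0 < u i \<and> u i \<le> 1" unfolding G_def
        by (auto simp: PiE_def Pi_def)
      define g where "g = (\<lambda>j. (- 2 * (\<Sum>i<j. ln (sort (map u [1..<K+1]) ! i)) - A j) / B j)"
      have "TA K A B u \<in> g ` {1..K}" unfolding TA_def g_def using K by (intro Max_in) auto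
      then obtain j where j: "j \<in> {1..K}" "TA K A B u = g j" by blast
      have Bj: "0 < B j" using Bm[OF j(1)] B1 by simp
      have "t \<le> g j" using uS j unfolding S_def by simp
      then have "B j * t \<le> - 2 * (\<Sum>i<j. ln (sort (map u [1..<K+1]) ! i)) - A j"
        unfolding g_def using Bj by (simp add: field_simps)
      moreover have "B 1 * t \<le> B j * t" using Bm[OF j(1)] t by (simp add: mult_right_mono)
      moreover have "(\<Sum>i=1..K. ln (u i)) \<le> (\<Sum>i<j. ln (sort (map u [1..<K+1]) ! i))"
        using j by (intro sorted_upper u01) auto
      moreover have "a \<le> A j" using aA[OF j(1)] .
      ultimately have "2 * (\<Sum>i=1..K. ln (u i)) \<le> - (a + B 1 * t)" by linarith
      then have "(\<Sum>i=1..K. ln (u i)) \<le> - L" unfolding L_def by (simp add: field_simps)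
      moreover have "ln (\<Prod>i=1..K. u i) = (\<Sum>i=1..K. ln (u i))"
        using u01 by (intro ln_prod) (simp, metis less_irrefl)
      moreover have pp: "0 < (\<Prod>i=1..K. u i)" using u01 by (intro prod_pos) auto
      ultimately have "(\<Prod>i=1..K. u i) \<le> exp (- L)"
        by (metis exp_le_cancel_iff exp_ln)
      then show ?thesis using uS True unfolding H_def S_def G_def by auto
    qed
  qed
  have Ss: "S \<in> sets (null_pvals K)" unfolding S_def by measurable
  have "measure (null_pvals K) S \<le> measure (null_pvals K) (H \<union> (space (null_pvals K) - G))"
    using sub Hs Gs by (intro Q.finite_measure_mono) auto
  also have "\<dots> \<le> measure (null_pvals K) H + measure (null_pvals K) (space (null_pvals K) - G)"
    using Hs Gs by (intro measure_Un_le) auto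
  also have "\<dots> = measure (null_pvals K) H" using mC by simp
  also have "\<dots> \<le> exp (1 - L) * L ^ K"
  proof -
    have "ennreal (measure (null_pvals K) H) \<le> ennreal (exp (1 - L) * L ^ K)"
      using markov_H[OF L1, of K] unfolding H_def[symmetric] by (simp add: Q.emeasure_eq_measure)
    then show ?thesis using L1 by (simp add: ennreal_le_iff)
  qed
  finally show ?thesis unfolding TA_pvalue_def S_def L_def .
qed



lemma lim1: "0 < (b::real) \<Longrightarrow> ((\<lambda>t. (c + b * t) / t) \<longlongrightarrow> b) at_top"
  by real_asymp

lemma lim2: "0 < (b::real) \<Longrightarrow> ((\<lambda>t. - 2 * (1 - (a + b * t) / 2 + real K * ln ((a + b * t) / 2)) / t) \<longlongrightarrow> b) at_top"
  by real_asymp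


lemma ev_a: "\<forall>\<^sub>F t in at_top. 0 < (t::real)" by real_asymp
lemma ev_b: "0 < (b::real) \<Longrightarrow> \<forall>\<^sub>F t in at_top. 0 \<le> c + b * t" by real_asymp
lemma ev_c: "0 < (b::real) \<Longrightarrow> \<forall>\<^sub>F t in at_top. 1 < (c + b * t) / 2" by real_asymp

lemma pval_rate:
  assumes K: "1 \<le> K" and B1: "0 < B 1" and Bm: "\<And>j. j \<in> {1..K} \<Longrightarrow> B 1 \<le> B j"
  shows "((\<lambda>t. - 2 * ln (TA_pvalue K A B t) / t) \<longlongrightarrow> B 1) at_top"
proof -
  define a where "a = Min (A ` {1..K})"
  have aA: "\<And>j. j \<in> {1..K} \<Longrightarrow> a \<le> A j" unfolding a_def by simp
  define F where "F = TA_pvalue K A B"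
  define lo where "lo = (\<lambda>t. - 2 * (1 - (a + B 1 * t) / 2 + real K * ln ((a + B 1 * t) / 2)) / t)"
  define up where "up = (\<lambda>t. (A 1 + B 1 * t) / t)"
  have ev: "\<forall>\<^sub>F t in at_top. 0 < t \<and> 0 \<le> A 1 + B 1 * t \<and> 1 < (a + B 1 * t) / 2"
    using B1 by (intro eventually_conj ev_a ev_b ev_c) auto
  have bounds: "lo t \<le> - 2 * ln (F t) / t \<and> - 2 * ln (F t) / t \<le> up t"
    if t: "0 < t" "0 \<le> A 1 + B 1 * t" "1 < (a + B 1 * t) / 2" for t
  proof -
    define s where "s = exp (- (A 1 + B 1 * t) / 2)"
    define L where "L = (a + B 1 * t) / 2"
    have s: "0 < s" "s \<le> 1" using t unfolding s_def by auto
    have "t \<le> (- 2 * ln s - A 1) / B 1" unfolding s_def using B1 by (simp add: field_simps)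
    then have lowF: "s \<le> F t" unfolding F_def by (intro null_lower K B1 s)
    have upF: "F t \<le> exp (1 - L) * L ^ K" unfolding F_def L_def
      using t by (intro null_upper K B1 Bm aA) auto
    have Fp: "0 < F t" using lowF s by simp
    have "ln s \<le> ln (F t)" using lowF s by simp
    then have "- 2 * ln (F t) \<le> A 1 + B 1 * t" unfolding s_def by simp
    then have u: "- 2 * ln (F t) / t \<le> up t" unfolding up_def using t
      by (intro divide_right_mono) auto
    have Lp: "0 < L" using t unfolding L_def by simp
    have "ln (F t) \<le> ln (exp (1 - L) * L ^ K)" using upF Fp by (simp del: ln_mult)
    also have "\<dots> = 1 - L + real K * ln L" using Lp by (simp add: ln_mult ln_realpow)
    finally have "- 2 * (1 - L + real K * ln L) \<le> - 2 * ln (F t)" by simp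
    then have l: "lo t \<le> - 2 * ln (F t) / t" unfolding lo_def L_def using t
      by (intro divide_right_mono) auto
    show ?thesis using l u by simp
  qed
  have "((\<lambda>t. - 2 * ln (F t) / t) \<longlongrightarrow> B 1) at_top"
  proof (rule tendsto_sandwich)
    show "\<forall>\<^sub>F t in at_top. lo t \<le> - 2 * ln (F t) / t" using ev by eventually_elim (use bounds in blast)
    show "\<forall>\<^sub>F t in at_top. - 2 * ln (F t) / t \<le> up t" using ev by eventually_elim (use bounds in blast)
    show "(lo \<longlongrightarrow> B 1) at_top" unfolding lo_def by (rule lim2[OF B1])
    show "(up \<longlongrightarrow> B 1) at_top" unfolding up_def by (rule lim1[OF B1])
  qed
  then show ?thesis unfolding F_def .
qed



lemma max_close:
  fixes f g :: "nat \<Rightarrow> real"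
  assumes J: "finite J" "J \<noteq> {}" and n: "0 < n" and fg: "\<And>j. j \<in> J \<Longrightarrow> \<bar>f j / n - g j\<bar> \<le> e"
  shows "\<bar>Max (f ` J) / n - Max (g ` J)\<bar> \<le> e"
proof -
  obtain j1 where j1: "j1 \<in> J" "Max (f ` J) = f j1" using J by (metis (mono_tags, lifting) Max_in finite_imageI image_iff image_is_empty)
  obtain j2 where j2: "j2 \<in> J" "Max (g ` J) = g j2" using J by (metis (mono_tags, lifting) Max_in finite_imageI image_iff image_is_empty)
  have "g j1 \<le> Max (g ` J)" using J j1 by simp
  moreover have "f j2 \<le> Max (f ` J)" using J j2 by simp
  then have "f j2 / n \<le> Max (f ` J) / n" using n by (simp add: divide_right_mono)
  ultimately show ?thesis using fg[OF j1(1)] fg[OF j2(1)] j1 j2 by (auto simp: abs_le_iff)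
qed

lemma sum_J0_le:
  fixes a :: "nat \<Rightarrow> real"
  assumes J0: "J0 \<subseteq> {1..K}" "card J0 = j" and j: "j \<le> K"
    and dec: "\<And>p q. p \<in> {1..K} \<Longrightarrow> q \<in> {1..K} \<Longrightarrow> q \<le> p \<Longrightarrow> a p \<le> a q"
  shows "(\<Sum>i\<in>J0. a i) \<le> (\<Sum>i=1..j. a i)"
proof (rule exchange)
  show "finite J0" using J0 finite_subset by blast
  show "card J0 = card {1..j}" using J0 by simp
  fix p q assume p: "p \<in> J0 - {1..j}" and q: "q \<in> {1..j} - J0"
  have "p \<in> {1..K}" "q \<in> {1..K}" "q \<le> p" using p q J0 j by auto
  then show "a p \<le> a q" by (rule dec)
qed simp


lemma gj_close:
  fixes u :: "nat \<Rightarrow> real" and a :: "nat \<Rightarrow> real"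
  assumes j: "j \<in> {1..K}" and u: "\<And>i. i \<in> {1..K} \<Longrightarrow> 0 < u i"
    and dec: "\<And>p q. p \<in> {1..K} \<Longrightarrow> q \<in> {1..K} \<Longrightarrow> q \<le> p \<Longrightarrow> a p \<le> a q"
    and n: "0 < n"
  shows "\<bar>(- 2 * (\<Sum>i<j. ln (sort (map u [1..<K+1]) ! i))) / n - (\<Sum>i=1..j. a i)\<bar>
     \<le> (\<Sum>i=1..K. \<bar>- 2 * ln (u i) / n - a i\<bar>)"
proof -
  have jK: "j \<le> K" using j by simp
  obtain J0 where J0: "J0 \<subseteq> {1..K}" "card J0 = j"
    "\<And>h::real\<Rightarrow>real. (\<Sum>i<j. h (sort (map u [1..<K+1]) ! i)) = (\<Sum>x\<in>J0. h (u x))"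
    using J0_exists[OF jK, of u] by blast
  define z where "z = (\<lambda>i. - 2 * ln (u i) / n)"
  define E where "E = (\<Sum>i=1..K. \<bar>z i - a i\<bar>)"
  have g: "(- 2 * (\<Sum>i<j. ln (sort (map u [1..<K+1]) ! i))) / n = (\<Sum>x\<in>J0. z x)"
    unfolding J0(3)[of ln] z_def by (simp add: sum_distrib_left sum_divide_distrib)
  have up: "(\<Sum>x\<in>J0. z x) \<le> (\<Sum>i=1..j. a i) + E"
  proof -
    have "(\<Sum>x\<in>J0. z x) = (\<Sum>x\<in>J0. a x) + (\<Sum>x\<in>J0. z x - a x)" by (simp add: sum_subtractf)
    also have "(\<Sum>x\<in>J0. a x) \<le> (\<Sum>i=1..j. a i)" by (rule sum_J0_le[OF J0(1,2) jK dec])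
    also have "(\<Sum>x\<in>J0. z x - a x) \<le> (\<Sum>x\<in>J0. \<bar>z x - a x\<bar>)" by (rule sum_mono) simp
    also have "\<dots> \<le> E" unfolding E_def by (rule sum_mono2) (use J0(1) in auto)
    finally show ?thesis by simp
  qed
  have lo: "(\<Sum>i=1..j. a i) - E \<le> (\<Sum>x\<in>J0. z x)"
  proof -
    have "(\<Sum>i<j. ln (sort (map u [1..<K+1]) ! i)) \<le> (\<Sum>i=1..j. ln (u i))"
      by (rule sorted_lower[OF u jK])
    moreover have mono: "- 2 * Y / n \<le> - 2 * X / n" if "X \<le> Y" for X Y :: real
      using that n by (intro divide_right_mono) auto
    ultimately have "- 2 * (\<Sum>i=1..j. ln (u i)) / n \<le> (- 2 * (\<Sum>i<j. ln (sort (map u [1..<K+1]) ! i))) / n"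
      by blast
    moreover have "(\<Sum>i=1..j. z i) = - 2 * (\<Sum>i=1..j. ln (u i)) / n"
      unfolding z_def by (simp add: sum_distrib_left sum_divide_distrib)
    ultimately have "(\<Sum>i=1..j. z i) \<le> (- 2 * (\<Sum>i<j. ln (sort (map u [1..<K+1]) ! i))) / n"
      by simp
    then have A: "(\<Sum>i=1..j. z i) \<le> (\<Sum>x\<in>J0. z x)" using g by simp
    have "(\<Sum>i=1..j. a i) = (\<Sum>i=1..j. z i) + (\<Sum>i=1..j. a i - z i)" by (simp add: sum_subtractf)
    also have "(\<Sum>i=1..j. a i - z i) \<le> (\<Sum>i=1..j. \<bar>z i - a i\<bar>)" by (rule sum_mono) simp
    also have "\<dots> \<le> E" unfolding E_def by (rule sum_mono2) (use jK in auto)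
    finally show ?thesis using A by simp
  qed
  show ?thesis using up lo g unfolding E_def z_def by (simp add: abs_le_iff)
qed


lemma obs_conv:
  fixes u :: "nat \<Rightarrow> nat \<Rightarrow> real" and a A B :: "nat \<Rightarrow> real" and n :: "nat \<Rightarrow> real"
  assumes K: "1 \<le> K" and upos: "\<And>m i. i \<in> {1..K} \<Longrightarrow> 0 < u m i"
    and conv: "\<And>i. i \<in> {1..K} \<Longrightarrow> (\<lambda>m. - 2 * ln (u m i) / n m) \<longlonglongrightarrow> a i"
    and dec: "\<And>p q. p \<in> {1..K} \<Longrightarrow> q \<in> {1..K} \<Longrightarrow> q \<le> p \<Longrightarrow> a p \<le> a q"
    and B1: "0 < B 1" and Bm: "\<And>j. j \<in> {1..K} \<Longrightarrow> B 1 \<le> B j"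
    and nlim: "filterlim n at_top sequentially"
  shows "(\<lambda>m. TA K A B (u m) / n m) \<longlonglongrightarrow> Max ((\<lambda>j. (\<Sum>i=1..j. a i) / B j) ` {1..K})"
proof -
  define E where "E = (\<lambda>m. \<Sum>i=1..K. \<bar>- 2 * ln (u m i) / n m - a i\<bar>)"
  define Am where "Am = (\<Sum>j=1..K. \<bar>A j\<bar>)"
  define D where "D = Max ((\<lambda>j. (\<Sum>i=1..j. a i) / B j) ` {1..K})"
  define b where "b = (\<lambda>m. (E m + Am / n m) / B 1)"
  have E0: "E \<longlonglongrightarrow> 0"
  proof -
    have "(\<lambda>m. \<Sum>i=1..K. \<bar>- 2 * ln (u m i) / n m - a i\<bar>) \<longlonglongrightarrow> (\<Sum>i=1..K. 0)"
    proof (intro tendsto_sum)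
      fix i assume i: "i \<in> {1..K}"
      show "(\<lambda>m. \<bar>- 2 * ln (u m i) / n m - a i\<bar>) \<longlonglongrightarrow> 0"
        using tendsto_rabs_zero[OF LIM_zero[OF conv[OF i]]] .
    qed
    then show ?thesis unfolding E_def by simp
  qed
  have A0: "(\<lambda>m. Am / n m) \<longlonglongrightarrow> 0"
    by (rule tendsto_divide_0[OF tendsto_const filterlim_at_top_imp_at_infinity[OF nlim]])
  have b0: "b \<longlonglongrightarrow> 0" unfolding b_def using tendsto_divide[OF tendsto_add[OF E0 A0] tendsto_const[of "B 1"]] B1
    by simp
  have evn: "\<forall>\<^sub>F m in sequentially. 0 < n m" using nlim by (simp add: filterlim_at_top_dense)
  have "\<forall>\<^sub>F m in sequentially. norm (TA K A B (u m) / n m - D) \<le> b m"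
    using evn
  proof eventually_elim
    case (elim m)
    note nm = elim
    show ?case unfolding TA_def D_def real_norm_def
    proof (rule max_close)
      show "finite {1..K}" "{1..K} \<noteq> {}" using K by auto
      show "0 < n m" by fact
      fix j assume j: "j \<in> {1..K}"
      define G where "G = (- 2 * (\<Sum>i<j. ln (sort (map (u m) [1..<K+1]) ! i))) / n m"
      have cl: "\<bar>G - (\<Sum>i=1..j. a i)\<bar> \<le> E m"
        unfolding G_def E_def by (rule gj_close[OF j upos dec nm])
      have Bj: "0 < B j" "B 1 \<le> B j" using Bm[OF j] B1 by auto
      have "\<bar>A j\<bar> \<le> Am" unfolding Am_def using j by (intro member_le_sum) auto
      then have Aj: "\<bar>A j / n m\<bar> \<le> Am / n m" using nm by (simp add: divide_right_mono)
      have eq: "(- 2 * (\<Sum>i<j. ln (sort (map (u m) [1..<K+1]) ! i)) - A j) / B j / n m - (\<Sum>i=1..j. a i) / B j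
          = ((G - (\<Sum>i=1..j. a i)) - A j / n m) / B j"
        unfolding G_def using nm Bj by (simp add: field_simps)
      have "\<bar>((G - (\<Sum>i=1..j. a i)) - A j / n m) / B j\<bar> = \<bar>(G - (\<Sum>i=1..j. a i)) - A j / n m\<bar> / B j"
        using Bj by simp
      also have "\<dots> \<le> (E m + Am / n m) / B j"
      proof (rule divide_right_mono)
        show "\<bar>(G - (\<Sum>i=1..j. a i)) - A j / n m\<bar> \<le> E m + Am / n m"
          using abs_triangle_ineq4[of "G - (\<Sum>i=1..j. a i)" "A j / n m"] cl Aj by linarith
      qed (use Bj in simp)
      also have "\<dots> \<le> (E m + Am / n m) / B 1"
      proof (rule divide_left_mono)
        show "0 \<le> E m + Am / n m" unfolding E_def Am_def using nm by (intro add_nonneg_nonneg sum_nonneg divide_nonneg_pos) auto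
      qed (use Bj B1 in auto)
      finally show "\<bar>(- 2 * (\<Sum>i<j. ln (sort (map (u m) [1..<K+1]) ! i)) - A j) / B j / n m - (\<Sum>i=1..j. a i) / B j\<bar> \<le> b m"
        unfolding eq b_def .
    qed
  qed
  then have "(\<lambda>m. TA K A B (u m) / n m - D) \<longlonglongrightarrow> 0" by (rule Lim_null_comparison[OF _ b0])
  then show ?thesis unfolding D_def by (simp add: LIM_zero_iff)
qed



theorem theorem2:
  fixes M :: "'a measure"
    and K l :: nat
    and P :: "nat \<Rightarrow> nat \<Rightarrow> 'a \<Rightarrow> real"
    and N :: "nat \<Rightarrow> nat \<Rightarrow> nat"
    and c lam A B :: "nat \<Rightarrow> real"
  defines "n \<equiv> (\<lambda>m. (\<Sum>i=1..K. real (N i m)) / real K)"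
  assumes M: "prob_space M"
    and K: "1 \<le> K"
    and meas: "\<And>i k. i \<in> {1..K} \<Longrightarrow> P i k \<in> borel_measurable M"
    and pval: "\<And>i k \<omega>. i \<in> {1..K} \<Longrightarrow> \<omega> \<in> space M \<Longrightarrow> 0 < P i k \<omega> \<and> P i k \<omega> \<le> 1"
    and slope: "\<And>i. i \<in> {1..K} \<Longrightarrow>
        AE \<omega> in M. (\<lambda>k. - 2 / real k * ln (P i k \<omega>)) \<longlonglongrightarrow> c i"
    and c_nonneg: "\<And>i. i \<in> {1..K} \<Longrightarrow> 0 \<le> c i"
    and n_lim: "filterlim n at_top sequentially"
    and ratio: "\<And>i. i \<in> {1..K} \<Longrightarrow> (\<lambda>m. real (N i m) / n m) \<longlonglongrightarrow> lam i"
    and lam_pos: "\<And>i. i \<in> {1..K} \<Longrightarrow> 0 < lam i"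
    and lam_sum: "(\<Sum>i=1..K. lam i) = real K"
    and ordered: "\<And>i j. i \<in> {1..K} \<Longrightarrow> j \<in> {1..K} \<Longrightarrow> i \<le> j \<Longrightarrow> lam j * c j \<le> lam i * c i"
    and ell: "1 \<le> l" "l \<le> K"
    and c_pos: "\<And>i. i \<in> {1..K} \<Longrightarrow> (0 < c i \<longleftrightarrow> i \<le> l)"
    and B_pos: "\<And>j. j \<in> {1..K} \<Longrightarrow> 0 < B j"
    and B_mono: "strict_mono_on {1..K} B"
    and no_ties: "inj_on (\<lambda>j. (\<Sum>i=1..j. lam i * c i) / B j) {1..K}"
  shows "\<exists>C. (AE \<omega> in M. (\<lambda>m. - 2 / n m * ln (TA_pvalue K A B (TA K A B (\<lambda>i. P i (N i m) \<omega>))))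
              \<longlonglongrightarrow> C)
          \<and> C \<le> Max ((\<lambda>j. B 1 / B j * (\<Sum>i=1..j. lam i * c i)) ` {1..l})
          \<and> (C = (\<Sum>i=1..l. lam i * c i) \<longleftrightarrow> l = 1)"
proof -
  define a where "a = (\<lambda>i. lam i * c i)"
  define S where "S = (\<lambda>j. \<Sum>i=1..j. a i)"
  define D where "D = Max ((\<lambda>j. S j / B j) ` {1..K})"
  define C where "C = B 1 * D"
  have K1: "1 \<in> {1..K}" using K by simp
  have B1: "0 < B 1" using B_pos[OF K1] .
  have Bm: "\<And>j. j \<in> {1..K} \<Longrightarrow> B 1 \<le> B j"
    using B_mono K1 by (auto intro: strict_mono_on_leD)
  have a_nn: "\<And>i. i \<in> {1..K} \<Longrightarrow> 0 \<le> a i"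
    unfolding a_def using lam_pos c_nonneg by (simp add: less_imp_le)
  have a_pos: "\<And>i. i \<in> {1..l} \<Longrightarrow> 0 < a i"
    unfolding a_def using lam_pos c_pos ell by auto
  have a_zero: "\<And>i. i \<in> {1..K} \<Longrightarrow> l < i \<Longrightarrow> a i = 0"
    unfolding a_def using c_pos c_nonneg by (metis linorder_not_le mult_zero_right order_less_le)
  have dec: "\<And>p q. p \<in> {1..K} \<Longrightarrow> q \<in> {1..K} \<Longrightarrow> q \<le> p \<Longrightarrow> a p \<le> a q"
    unfolding a_def using ordered by blast
  have D_ge: "S j / B j \<le> D" if "j \<in> {1..K}" for j unfolding D_def using that by simp
  have Dpos: "0 < D"
  proof -
    have "S 1 = a 1" unfolding S_def by simp
    then have "0 < S 1 / B 1" using a_pos[of 1] ell B1 by simp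
    then show ?thesis using D_ge[OF K1] by simp
  qed
  have rate: "((\<lambda>t. - 2 * ln (TA_pvalue K A B t) / t) \<longlongrightarrow> B 1) at_top"
    by (rule pval_rate[of K B A, OF K B1 Bm])
  have evn: "\<forall>\<^sub>F m in sequentially. 0 < n m" using n_lim by (simp add: filterlim_at_top_dense)
  have part1: "AE \<omega> in M. (\<lambda>m. - 2 / n m * ln (TA_pvalue K A B (TA K A B (\<lambda>i. P i (N i m) \<omega>)))) \<longlonglongrightarrow> C"
  proof -
    have "AE \<omega> in M. \<forall>i\<in>{1..K}. (\<lambda>k. - 2 / real k * ln (P i k \<omega>)) \<longlonglongrightarrow> c i"
      by (rule AE_finite_allI) (simp, rule slope)
    then show ?thesis using AE_space
    proof eventually_elim
      case (elim \<omega>)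
      define u where "u = (\<lambda>m i. P i (N i m) \<omega>)"
      have conv: "(\<lambda>m. - 2 * ln (u m i) / n m) \<longlonglongrightarrow> a i" if i: "i \<in> {1..K}" for i
      proof -
        have rN: "filterlim (\<lambda>m. real (N i m)) at_top sequentially"
        proof -
          have "filterlim (\<lambda>m. real (N i m) / n m * n m) at_top sequentially"
            by (rule filterlim_tendsto_pos_mult_at_top[OF ratio[OF i] lam_pos[OF i] n_lim])
          moreover have "\<forall>\<^sub>F m in sequentially. real (N i m) / n m * n m = real (N i m)"
            using evn by eventually_elim simp
          ultimately show ?thesis by (rule filterlim_cong[THEN iffD1, OF refl refl, rotated])
        qed
        then have Nl: "filterlim (N i) sequentially sequentially"
          by (simp add: filterlim_sequentially_iff_filterlim_real)
        have evN: "\<forall>\<^sub>F m in sequentially. 0 < real (N i m)" using rN unfolding filterlim_at_top_dense by blast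
        have "(\<lambda>m. - 2 / real (N i m) * ln (P i (N i m) \<omega>)) \<longlonglongrightarrow> c i"
          using filterlim_compose[OF _ Nl] elim(1) i by blast
        then have "(\<lambda>m. (- 2 / real (N i m) * ln (P i (N i m) \<omega>)) * (real (N i m) / n m)) \<longlonglongrightarrow> c i * lam i"
          by (rule tendsto_mult[OF _ ratio[OF i]])
        moreover have "\<forall>\<^sub>F m in sequentially. (- 2 / real (N i m) * ln (P i (N i m) \<omega>)) * (real (N i m) / n m) = - 2 * ln (u m i) / n m"
          using evN evn by eventually_elim (simp add: u_def field_simps)
        ultimately have "(\<lambda>m. - 2 * ln (u m i) / n m) \<longlonglongrightarrow> c i * lam i"
          by (rule Lim_transform_eventually)
        then show ?thesis unfolding a_def by (simp add: mult.commute)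
      qed
      have upos: "\<And>m i. i \<in> {1..K} \<Longrightarrow> 0 < u m i" unfolding u_def using pval elim(2) by blast
      have obs: "(\<lambda>m. TA K A B (u m) / n m) \<longlonglongrightarrow> D"
        unfolding D_def S_def by (rule obs_conv[of K u n a B A, OF K upos conv dec B1 Bm n_lim]) auto
      have Tl: "filterlim (\<lambda>m. TA K A B (u m)) at_top sequentially"
      proof -
        have "filterlim (\<lambda>m. TA K A B (u m) / n m * n m) at_top sequentially"
          by (rule filterlim_tendsto_pos_mult_at_top[OF obs Dpos n_lim])
        moreover have "\<forall>\<^sub>F m in sequentially. TA K A B (u m) / n m * n m = TA K A B (u m)"
          using evn by eventually_elim simp
        ultimately show ?thesis by (rule filterlim_cong[THEN iffD1, OF refl refl, rotated])
      qed
      have evT: "\<forall>\<^sub>F m in sequentially. 0 < TA K A B (u m)" using Tl by (simp add: filterlim_at_top_dense)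
      have "(\<lambda>m. - 2 * ln (TA_pvalue K A B (TA K A B (u m))) / TA K A B (u m)) \<longlonglongrightarrow> B 1"
        by (rule filterlim_compose[OF rate Tl])
      then have "(\<lambda>m. (- 2 * ln (TA_pvalue K A B (TA K A B (u m))) / TA K A B (u m)) * (TA K A B (u m) / n m)) \<longlonglongrightarrow> B 1 * D"
        by (rule tendsto_mult[OF _ obs])
      moreover have "\<forall>\<^sub>F m in sequentially. (- 2 * ln (TA_pvalue K A B (TA K A B (u m))) / TA K A B (u m)) * (TA K A B (u m) / n m)
          = - 2 / n m * ln (TA_pvalue K A B (TA K A B (u m)))"
        using evT evn by eventually_elim (simp add: field_simps)
      ultimately have "(\<lambda>m. - 2 / n m * ln (TA_pvalue K A B (TA K A B (u m)))) \<longlonglongrightarrow> C"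
        unfolding C_def by (rule Lim_transform_eventually)
      then show ?case unfolding u_def .
    qed
  qed
  have S_nn: "0 \<le> S j" if "j \<le> K" for j
    unfolding S_def using that by (intro sum_nonneg a_nn) auto
  have S_const: "S j = S l" if "j \<in> {1..K}" "l \<le> j" for j
    unfolding S_def
  proof (rule sum.mono_neutral_left[symmetric])
    show "\<forall>i\<in>{1..j} - {1..l}. a i = 0" using that a_zero by auto
  qed (use that in auto)
  define Mx where "Mx = Max ((\<lambda>j. B 1 / B j * S j) ` {1..l})"
  have Mx_ge: "B 1 / B j * S j \<le> Mx" if "j \<in> {1..l}" for j unfolding Mx_def using that by simp
  obtain js where js: "js \<in> {1..K}" "D = S js / B js"
    unfolding D_def using K by (metis (no_types, lifting) Max_in empty_iff finite_atLeastAtMost finite_imageI imageE image_is_empty K1)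
  have Bjs: "0 < B js" using B_pos[OF js(1)] .
  have CMx: "C \<le> Mx"
  proof (cases "js \<le> l")
    case True
    have "C = B 1 / B js * S js" unfolding C_def js(2) by simp
    also have "\<dots> \<le> Mx" using True js by (intro Mx_ge) auto
    finally show ?thesis .
  next
    case False
    have l1: "l \<in> {1..K}" using ell by simp
    have Bl: "0 < B l" "B l \<le> B js" using B_pos[OF l1] strict_mono_on_leD[OF B_mono l1 js(1)] False by auto
    have "C = B 1 * S l / B js" unfolding C_def js(2) using S_const[OF js(1)] False by simp
    also have "\<dots> \<le> B 1 * S l / B l"
      using Bl B1 S_nn[of l] ell by (intro divide_left_mono mult_nonneg_nonneg) auto
    also have "\<dots> = B 1 / B l * S l" by simp
    also have "\<dots> \<le> Mx" using ell by (intro Mx_ge) auto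
    finally show ?thesis .
  qed
  have Sl: "(\<Sum>i=1..l. lam i * c i) = S l" unfolding S_def a_def by simp
  have iff: "C = S l \<longleftrightarrow> l = 1"
  proof
    assume l1: "l = 1"
    have "Mx = B 1 / B 1 * S 1" unfolding Mx_def l1 by simp
    then have "C \<le> S 1" using CMx B1 by simp
    moreover have "S 1 \<le> C" unfolding C_def using D_ge[OF K1] B1 by (simp add: field_simps)
    ultimately show "C = S l" using l1 by simp
  next
    assume CS: "C = S l"
    show "l = 1"
    proof (rule ccontr)
      assume "l \<noteq> 1"
      then have l2: "1 < l" using ell by simp
      obtain j0 where j0: "j0 \<in> {1..l}" "Mx = B 1 / B j0 * S j0"
        unfolding Mx_def using ell by (metis (no_types, lifting) Max_in empty_iff finite_atLeastAtMost finite_imageI imageE image_is_empty atLeastAtMost_iff order_refl)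
      have j0K: "j0 \<in> {1..K}" using j0 ell by auto
      have Bj0: "0 < B j0" "B 1 \<le> B j0" using B_pos[OF j0K] Bm[OF j0K] by auto
      have alp: "0 < a l" using a_pos ell by auto
      have "Mx < S l"
      proof (cases "j0 = l")
        case True
        have "B 1 < B l" using B_mono K1 j0K True l2 by (intro strict_mono_onD[OF B_mono K1]) auto
        moreover have "0 < S l"
        proof -
          have "a l \<le> S l" unfolding S_def using ell a_nn by (intro member_le_sum) auto
          then show ?thesis using alp by simp
        qed
        ultimately have "B 1 / B l * S l < 1 * S l" using B1 by (intro mult_strict_right_mono) auto
        then show ?thesis using j0 True by simp
      next
        case False
        then have jl: "j0 < l" using j0 by simp
        have "B 1 / B j0 \<le> 1" using Bj0 by simp
        then have "B 1 / B j0 * S j0 \<le> 1 * S j0" using S_nn[of j0] j0K by (intro mult_right_mono) auto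
        moreover have "S j0 + a l \<le> S l"
        proof -
          have "S j0 + a l = (\<Sum>i\<in>insert l {1..j0}. a i)" unfolding S_def using jl by simp
          also have "\<dots> \<le> S l" unfolding S_def using jl ell a_nn by (intro sum_mono2) auto
          finally show ?thesis .
        qed
        ultimately show ?thesis using j0 alp by simp
      qed
      then show False using CMx CS by simp
    qed
  qed
  show ?thesis
    by (rule exI[of _ C]) (use part1 CMx iff Sl in \<open>simp add: Mx_def S_def a_def\<close>)
qed


end
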